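(* Let $\mathcal{S} = s_1, s_2, \dots$ be the integer sequence in which $s_i$ is the position of the lowest-order $1$ bit in the binary representation of $i$ (i.e. $s_i = 1 + \nu_2(i)$, where $\nu_2(i)$ is the exponent of $2$ in $i$). Then for all integers $k, r > 0$, \[ \sum_{i=1}^{k} s_i \leq \sum_{i=r}^{r+k-1} s_i . \] That is, the prefix of length $k$ of $\mathcal{S}$ has the smallest sum among all contiguous subsequences of length $k$ of $\mathcal{S}$.
   Context: The sequence $\mathcal{S}$ (the "ruler function") begins $1,2,1,3,1,2,1,4,1,2,1,3,1,2,1,5,\dots$; $s_i$ is the number of bits that must be counted from right to left to reach the first $1$ in the binary representation of $i$. *)

theory Defs
  imports "HOL-Computational_Algebra.Computational_Algebra"
begin

definition ruler :: "nat \<Rightarrow> nat" where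
  "ruler i = 1 + multiplicity (2::nat) i"

end

theory Submission
  imports Defs
begin

lemma sum_ruler:
  assumes "0 \<notin> A" "finite A"
  shows "(\<Sum>i\<in>A. ruler i) = card A + multiplicity (2::nat) (\<Prod>A)"
proof -
  have "multiplicity (2::nat) (\<Prod>A) = (\<Sum>i\<in>A. multiplicity 2 i)"
    using assms by (intro prime_elem_multiplicity_prod_distrib) auto
  moreover have "(\<Sum>i\<in>A. ruler i) = (\<Sum>i\<in>A. 1 + multiplicity (2::nat) i)" by (simp add: ruler_def)
  ultimately show ?thesis by (simp only: sum.distrib) simp
qed

theorem lemma1:
  fixes k r :: nat
  assumes "k > 0" and "r > 0"
  shows "(\<Sum>i=1..k. ruler i) \<le> (\<Sum>i=r..r+k-1. ruler i)"
proof -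
  define P where "P = \<Prod>{r..r+k-1}"
  have f1: "(fact (r+k-1)::nat) = fact (r-1) * P"
    using fact_eq_fact_times[of "r-1" "r+k-1"] assms
    by (simp add: P_def Suc_diff_1)
  have f2: "(fact (r+k-1)::nat) = fact k * fact (r-1) * ((r+k-1) choose k)"
    using binomial_fact_lemma[of k "r+k-1"] assms by simp
  have "P = fact k * ((r+k-1) choose k)"
    using f1 f2 by (metis fact_nonzero mult.commute mult.left_commute mult_left_cancel)
  hence dv: "fact k dvd P" by simp
  have P0: "P \<noteq> 0" using assms by (simp add: P_def)
  have "(\<Sum>i=1..k. ruler i) = k + multiplicity (2::nat) (fact k)"
    by (subst sum_ruler) (auto simp: fact_prod)
  also have "\<dots> \<le> k + multiplicity (2::nat) P"
    using dvd_imp_multiplicity_le[OF dv P0] by simp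
  also have "\<dots> = (\<Sum>i=r..r+k-1. ruler i)"
    using assms by (subst sum_ruler) (auto simp: P_def)
  finally show ?thesis .
qed

end
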